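(* Let $R$ be a commutative ring with $1\neq 0$, $M$ an $R$-module, and $S\subseteq T$ multiplicatively closed subsets of $R$. Then every $S$-quasi-copure submodule of $M$ is a $T$-quasi-copure submodule of $M$, i.e., $C^{S}_{q}(M)\subseteq C^{T}_{q}(M)$.
   Context: All rings are commutative with $1\neq 0$ and all modules are unital. A multiplicatively closed subset (m.c.s.) $S$ of $R$ is a subset with $0\notin S$, $1\in S$, and $ss'\in S$ for all $s,s'\in S$. For an ideal $I$ and submodule $L$, $(L:_M I)=\{m\in M: Im\subseteq L\}$, $(0:_M I)=\{m\in M: Im=0\}$, $(L:_R M)=\{r\in R: rM\subseteq L\}$. A submodule $P$ of $M$ with $(P:_R M)\cap S=\emptyset$ is $S$-prime if there exists $s\in S$ such that whenever $am\in P$ ($a\in R$, $m\in M$), then $sa\in(P:_R M)$ or $sm\in P$. A submodule $L$ of $M$ is $S$-copure if there exists $s\in S$ such that $s(L:_M I)\subseteq L+(0:_M I)$ for every ideal $I$ of $R$. A submodule $N$ of $M$ is $S$-quasi-copure if every $S$-prime submodule of $M$ containing $N$ is $S$-copure; $C^{S}_{q}(M)$ denotes the set of $S$-quasi-copure submodules of $M$. *)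

theory Defs
  imports "HOL-Algebra.Algebra"
begin

definition mcs :: "('a, 'c) ring_scheme \<Rightarrow> 'a set \<Rightarrow> bool" where
  "mcs R S \<longleftrightarrow> S \<subseteq> carrier R \<and> \<zero>\<^bsub>R\<^esub> \<notin> S \<and> \<one>\<^bsub>R\<^esub> \<in> S \<and>
     (\<forall>s\<in>S. \<forall>s'\<in>S. s \<otimes>\<^bsub>R\<^esub> s' \<in> S)"

definition colonRM :: "('a, 'c) ring_scheme \<Rightarrow> ('a, 'b, 'd) module_scheme \<Rightarrow> 'b set \<Rightarrow> 'a set" where
  "colonRM R M L = {r \<in> carrier R. \<forall>m\<in>carrier M. r \<odot>\<^bsub>M\<^esub> m \<in> L}"

definition colonMI :: "('a, 'b, 'd) module_scheme \<Rightarrow> 'b set \<Rightarrow> 'a set \<Rightarrow> 'b set" where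
  "colonMI M L I = {m \<in> carrier M. \<forall>a\<in>I. a \<odot>\<^bsub>M\<^esub> m \<in> L}"

definition annM :: "('a, 'b, 'd) module_scheme \<Rightarrow> 'a set \<Rightarrow> 'b set" where
  "annM M I = colonMI M {\<zero>\<^bsub>M\<^esub>} I"

definition S_prime :: "('a, 'c) ring_scheme \<Rightarrow> ('a, 'b, 'd) module_scheme \<Rightarrow> 'a set \<Rightarrow> 'b set \<Rightarrow> bool" where
  "S_prime R M S P \<longleftrightarrow> submodule P R M \<and> colonRM R M P \<inter> S = {} \<and>
     (\<exists>s\<in>S. \<forall>a\<in>carrier R. \<forall>m\<in>carrier M. a \<odot>\<^bsub>M\<^esub> m \<in> P \<longrightarrow>
        s \<otimes>\<^bsub>R\<^esub> a \<in> colonRM R M P \<or> s \<odot>\<^bsub>M\<^esub> m \<in> P)"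

definition S_copure :: "('a, 'c) ring_scheme \<Rightarrow> ('a, 'b, 'd) module_scheme \<Rightarrow> 'a set \<Rightarrow> 'b set \<Rightarrow> bool" where
  "S_copure R M S L \<longleftrightarrow> submodule L R M \<and>
     (\<exists>s\<in>S. \<forall>I. ideal I R \<longrightarrow>
        (\<lambda>m. s \<odot>\<^bsub>M\<^esub> m) ` colonMI M L I \<subseteq> L <+>\<^bsub>M\<^esub> annM M I)"

definition S_quasi_copure :: "('a, 'c) ring_scheme \<Rightarrow> ('a, 'b, 'd) module_scheme \<Rightarrow> 'a set \<Rightarrow> 'b set \<Rightarrow> bool" where
  "S_quasi_copure R M S N \<longleftrightarrow> submodule N R M \<and>
     (\<forall>P. S_prime R M S P \<and> N \<subseteq> P \<longrightarrow> S_copure R M S P)"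

definition CqS :: "('a, 'c) ring_scheme \<Rightarrow> ('a, 'b, 'd) module_scheme \<Rightarrow> 'a set \<Rightarrow> 'b set set" where
  "CqS R M S = {N. S_quasi_copure R M S N}"

end

theory Submission
  imports Defs
begin

lemma sub_carrier: "submodule H R M \<Longrightarrow> H \<subseteq> carrier M"
  using submodule.axioms(1) subgroup.subset by fastforce

lemma sub_add: "submodule H R M \<Longrightarrow> a \<in> H \<Longrightarrow> b \<in> H \<Longrightarrow> a \<oplus>\<^bsub>M\<^esub> b \<in> H"
  using submodule.axioms(1) subgroup.m_closed by fastforce

lemma sub_zero: "submodule H R M \<Longrightarrow> \<zero>\<^bsub>M\<^esub> \<in> H"
  using submodule.axioms(1) subgroup.one_closed by fastforce

lemma sub_inv: "submodule H R M \<Longrightarrow> a \<in> H \<Longrightarrow> \<ominus>\<^bsub>M\<^esub> a \<in> H"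
  using submodule.axioms(1) subgroup.m_inv_closed unfolding a_inv_def by fastforce

lemma sub_smult: "submodule H R M \<Longrightarrow> a \<in> carrier R \<Longrightarrow> x \<in> H \<Longrightarrow> a \<odot>\<^bsub>M\<^esub> x \<in> H"
  using submodule.smult_closed by fastforce

lemma (in module) key:
  assumes S: "mcs R S" and T: "mcs R T" and ST: "S \<subseteq> T"
    and P: "S_prime R M T P"
  shows "\<exists>Q. S_prime R M S Q \<and> P \<subseteq> Q \<and> (S_copure R M S Q \<longrightarrow> S_copure R M T P)"
proof -
  have subP: "submodule P R M" and disj: "colonRM R M P \<inter> T = {}"
    using P unfolding S_prime_def by auto
  from P obtain w where wT: "w \<in> T" and wp: "\<And>a m. a \<in> carrier R \<Longrightarrow> m \<in> carrier M \<Longrightarrow>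
      a \<odot>\<^bsub>M\<^esub> m \<in> P \<Longrightarrow> w \<otimes> a \<in> colonRM R M P \<or> w \<odot>\<^bsub>M\<^esub> m \<in> P"
    unfolding S_prime_def by blast
  have Tc: "T \<subseteq> carrier R" and Tm: "\<And>x y. x \<in> T \<Longrightarrow> y \<in> T \<Longrightarrow> x \<otimes> y \<in> T"
    using T unfolding mcs_def by auto
  have Sc: "S \<subseteq> carrier R" and S1: "\<one> \<in> S" using S unfolding mcs_def by auto
  have wc: "w \<in> carrier R" using wT Tc by auto
  have Pc: "P \<subseteq> carrier M" using sub_carrier[OF subP] .
  define Q where "Q = {m \<in> carrier M. w \<odot>\<^bsub>M\<^esub> m \<in> P}"
  have subQ: "submodule Q R M"
  proof (rule submoduleI)
    show "Q \<subseteq> carrier M" unfolding Q_def by auto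
    show "\<zero>\<^bsub>M\<^esub> \<in> Q" unfolding Q_def using wc sub_zero[OF subP] by auto
    fix a assume "a \<in> Q"
    then show "\<ominus>\<^bsub>M\<^esub> a \<in> Q" unfolding Q_def
      using sub_inv[OF subP] wc by (auto simp: smult_r_minus)
  next
    fix a b assume "a \<in> Q" "b \<in> Q"
    then show "a \<oplus>\<^bsub>M\<^esub> b \<in> Q" unfolding Q_def
      using sub_add[OF subP] wc by (auto simp: smult_r_distr)
  next
    fix a x assume "a \<in> carrier R" "x \<in> Q"
    then show "a \<odot>\<^bsub>M\<^esub> x \<in> Q" unfolding Q_def
      using sub_smult[OF subP] wc
      by (auto simp: smult_assoc1[symmetric] m_comm) (metis smult_assoc1)
  qed
  have PQ: "P \<subseteq> Q" unfolding Q_def using Pc sub_smult[OF subP wc] by auto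
  have colQ: "a \<in> colonRM R M Q" if "a \<in> carrier R" "w \<otimes> a \<in> colonRM R M P" for a
    using that wc unfolding colonRM_def Q_def by (auto simp: smult_assoc1)
  have primeQ: "S_prime R M S Q"
    unfolding S_prime_def
  proof (intro conjI)
    show "submodule Q R M" by (rule subQ)
    show "colonRM R M Q \<inter> S = {}"
    proof (rule ccontr)
      assume "colonRM R M Q \<inter> S \<noteq> {}"
      then obtain s where s: "s \<in> S" "s \<in> colonRM R M Q" by auto
      have sc: "s \<in> carrier R" using s Sc by auto
      have "w \<otimes> s \<in> colonRM R M P"
        using s sc wc unfolding colonRM_def Q_def by (auto simp: smult_assoc1)
      moreover have "w \<otimes> s \<in> T" using Tm wT s ST by auto
      ultimately show False using disj by auto
    qed
    show "\<exists>s\<in>S. \<forall>a\<in>carrier R. \<forall>m\<in>carrier M. a \<odot>\<^bsub>M\<^esub> m \<in> Q \<longrightarrow>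
        s \<otimes> a \<in> colonRM R M Q \<or> s \<odot>\<^bsub>M\<^esub> m \<in> Q"
    proof (intro bexI[OF _ S1] ballI impI)
      fix a m assume a: "a \<in> carrier R" and m: "m \<in> carrier M" and am: "a \<odot>\<^bsub>M\<^esub> m \<in> Q"
      have "w \<odot>\<^bsub>M\<^esub> (a \<odot>\<^bsub>M\<^esub> m) \<in> P" using am unfolding Q_def by auto
      hence "a \<odot>\<^bsub>M\<^esub> (w \<odot>\<^bsub>M\<^esub> m) \<in> P" using a m wc
        by (metis smult_assoc1 m_comm)
      hence "w \<otimes> a \<in> colonRM R M P \<or> w \<odot>\<^bsub>M\<^esub> (w \<odot>\<^bsub>M\<^esub> m) \<in> P"
        using wp[of a "w \<odot>\<^bsub>M\<^esub> m"] a m wc by auto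
      thus "\<one> \<otimes> a \<in> colonRM R M Q \<or> \<one> \<odot>\<^bsub>M\<^esub> m \<in> Q"
      proof
        assume "w \<otimes> a \<in> colonRM R M P"
        thus ?thesis using colQ a by auto
      next
        assume h: "w \<odot>\<^bsub>M\<^esub> (w \<odot>\<^bsub>M\<^esub> m) \<in> P"
        have ww: "w \<otimes> w \<in> carrier R" using wc by auto
        have "(w \<otimes> w) \<odot>\<^bsub>M\<^esub> m \<in> P" using h wc m by (simp add: smult_assoc1)
        hence "w \<otimes> (w \<otimes> w) \<in> colonRM R M P \<or> w \<odot>\<^bsub>M\<^esub> m \<in> P"
          using wp[OF ww m] by auto
        moreover have "w \<otimes> (w \<otimes> w) \<in> T" using Tm wT by auto
        ultimately have "w \<odot>\<^bsub>M\<^esub> m \<in> P" using disj by auto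
        thus ?thesis using m unfolding Q_def by auto
      qed
    qed
  qed
  have "S_copure R M T P" if cQ: "S_copure R M S Q"
  proof -
    from cQ obtain s where sS: "s \<in> S" and hs: "\<And>I. ideal I R \<Longrightarrow>
        (\<lambda>m. s \<odot>\<^bsub>M\<^esub> m) ` colonMI M Q I \<subseteq> Q <+>\<^bsub>M\<^esub> annM M I"
      unfolding S_copure_def by blast
    have sc: "s \<in> carrier R" using sS Sc by auto
    show ?thesis unfolding S_copure_def
    proof (intro conjI bexI[of _ "w \<otimes> s"] allI impI subsetI)
      show "submodule P R M" by (rule subP)
      show "w \<otimes> s \<in> T" using Tm wT sS ST by auto
      fix I x assume I: "ideal I R" and x: "x \<in> (\<lambda>m. (w \<otimes> s) \<odot>\<^bsub>M\<^esub> m) ` colonMI M P I"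
      have Ic: "I \<subseteq> carrier R" using I by (simp add: ideal.axioms(1) additive_subgroup.a_subset)
      from x obtain m where mI: "m \<in> colonMI M P I" and xm: "x = (w \<otimes> s) \<odot>\<^bsub>M\<^esub> m" by auto
      have mc: "m \<in> carrier M" using mI unfolding colonMI_def by auto
      have "m \<in> colonMI M Q I" using mI PQ unfolding colonMI_def by auto
      hence "s \<odot>\<^bsub>M\<^esub> m \<in> Q <+>\<^bsub>M\<^esub> annM M I" using hs[OF I] by auto
      then obtain q z where q: "q \<in> Q" and z: "z \<in> annM M I" and e: "s \<odot>\<^bsub>M\<^esub> m = q \<oplus>\<^bsub>M\<^esub> z"
        unfolding set_add_def' by auto
      have qc: "q \<in> carrier M" using q unfolding Q_def by auto
      have zc: "z \<in> carrier M" and za: "\<And>a. a \<in> I \<Longrightarrow> a \<odot>\<^bsub>M\<^esub> z = \<zero>\<^bsub>M\<^esub>"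
        using z unfolding annM_def colonMI_def by auto
      have "x = w \<odot>\<^bsub>M\<^esub> q \<oplus>\<^bsub>M\<^esub> w \<odot>\<^bsub>M\<^esub> z"
        using xm e wc sc mc qc zc by (simp add: smult_assoc1 smult_r_distr)
      moreover have "w \<odot>\<^bsub>M\<^esub> q \<in> P" using q unfolding Q_def by auto
      moreover have "w \<odot>\<^bsub>M\<^esub> z \<in> annM M I"
        unfolding annM_def colonMI_def
      proof (intro CollectI conjI ballI)
        show "w \<odot>\<^bsub>M\<^esub> z \<in> carrier M" using wc zc by auto
        fix a assume a: "a \<in> I"
        have ac: "a \<in> carrier R" using a Ic by auto
        have "a \<odot>\<^bsub>M\<^esub> (w \<odot>\<^bsub>M\<^esub> z) = w \<odot>\<^bsub>M\<^esub> (a \<odot>\<^bsub>M\<^esub> z)"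
          using ac wc zc by (metis smult_assoc1 m_comm)
        also have "\<dots> = \<zero>\<^bsub>M\<^esub>" using za[OF a] wc by simp
        finally show "a \<odot>\<^bsub>M\<^esub> (w \<odot>\<^bsub>M\<^esub> z) \<in> {\<zero>\<^bsub>M\<^esub>}" by simp
      qed
      ultimately show "x \<in> P <+>\<^bsub>M\<^esub> annM M I" unfolding set_add_def' by auto
    qed
  qed
  thus ?thesis using primeQ PQ by blast
qed

theorem theorem3p5:
  fixes R :: "('a, 'c) ring_scheme" and M :: "('a, 'b, 'd) module_scheme"
    and S T :: "'a set"
  assumes "module R M"
    and "\<one>\<^bsub>R\<^esub> \<noteq> \<zero>\<^bsub>R\<^esub>"
    and "mcs R S" and "mcs R T" and "S \<subseteq> T"
  shows "CqS R M S \<subseteq> CqS R M T"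
proof
  fix N assume "N \<in> CqS R M S"
  hence N: "submodule N R M" and h: "\<And>P. S_prime R M S P \<Longrightarrow> N \<subseteq> P \<Longrightarrow> S_copure R M S P"
    unfolding CqS_def S_quasi_copure_def by auto
  have "S_copure R M T P" if P: "S_prime R M T P" and NP: "N \<subseteq> P" for P
  proof -
    obtain Q where "S_prime R M S Q" "P \<subseteq> Q" "S_copure R M S Q \<longrightarrow> S_copure R M T P"
      using module.key[OF assms(1) assms(3) assms(4) assms(5) P] by blast
    thus ?thesis using h NP by blast
  qed
  thus "N \<in> CqS R M T" unfolding CqS_def S_quasi_copure_def using N by auto
qed

end
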